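(* Let $\mathcal{H}=\operatorname{coh}\mathbb{X}$ for a weighted projective line of weight type $(p_1,\ldots,p_t)$, and let $y\in K_0(\mathcal{H})$. The linear form $\lambda=\langle y,-\rangle:K_0(\mathcal{H})\to\mathbb{Z}$ satisfies $\lambda\circ(1+\Phi)=0$ if and only if $\Phi y=-y$. In this case $\operatorname{rk}(y)=0$ and $\deg(y)=0$.
   Context: $k$ is algebraically closed; $\mathcal{H}=\operatorname{coh}\mathbb{X}$ is hereditary abelian with Serre duality and AR translation $\tau$. The Euler form on $K_0(\mathcal{H})$ is $\langle[X],[Y]\rangle=\dim_k\operatorname{Hom}(X,Y)-\dim_k\operatorname{Ext}^1(X,Y)$; it is nondegenerate with Gram matrix of determinant $\pm1$. The Coxeter transformation $\Phi$ is the automorphism of $K_0(\mathcal{H})$ with $\Phi[X]=[\tau X]$. $L$ is the structure sheaf, $a=[L]$, $S_0$ a simple sheaf in a homogeneous (rank one) tube, $s_0=[S_0]$. The rank is $\operatorname{rk}(x)=\langle x,s_0\rangle$ and the degree is $\deg(x)=\sum_{j=0}^{p-1}\langle\Phi^ja,\,x-\operatorname{rk}(x)a\rangle$ with $p=\operatorname{lcm}(p_1,\ldots,p_t)$. *)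

theory Defs
  imports Main
begin

text \<open>
  Model of the Grothendieck group K_0(coh X) of a weighted projective line X of
  weight type ps = [p_1,...,p_t] (all p_i >= 2), via the canonical tilting bundle
  T = direct sum of the line bundles O(u), 0 <= u <= c (Geigle--Lenzing).
  The classes [O(u)] form a Z-basis of K_0; they are indexed by
    LZero   ~ O          (u = 0),
    LPt i l ~ O(l x_i)   (i < t, 1 <= l <= p_i - 1),
    LC      ~ O(c)       (u = c).
  Since T is tilting, Ext^1 vanishes between these, so the Euler form on basis
  elements is dim Hom(O(u),O(v)) = dim S_(v-u) (S the graded coordinate ring).
\<close>

datatype lidx = LZero | LPt nat nat | LC

definition lidx_set :: "nat list \<Rightarrow> lidx set" where
  "lidx_set ps = {LZero, LC} \<union> {LPt i l | i l. i < length ps \<and> 1 \<le> l \<and> l < ps ! i}"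

fun homdim :: "lidx \<Rightarrow> lidx \<Rightarrow> int" where
  "homdim LZero LZero = 1"
| "homdim LZero (LPt i l) = 1"
| "homdim LZero LC = 2"
| "homdim (LPt i l) (LPt j m) = (if i = j \<and> l \<le> m then 1 else 0)"
| "homdim (LPt i l) LC = 1"
| "homdim (LPt i l) LZero = 0"
| "homdim LC LC = 1"
| "homdim LC _ = 0"

definition K0 :: "nat list \<Rightarrow> (lidx \<Rightarrow> int) set" where
  "K0 ps = {x. \<forall>u. u \<notin> lidx_set ps \<longrightarrow> x u = 0}"

definition euler :: "nat list \<Rightarrow> (lidx \<Rightarrow> int) \<Rightarrow> (lidx \<Rightarrow> int) \<Rightarrow> int" where
  "euler ps x y = (\<Sum>u\<in>lidx_set ps. \<Sum>v\<in>lidx_set ps. x u * y v * homdim u v)"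

text \<open>Coxeter transformation Phi[X] = [tau X], determined by Serre duality
  <x,y> = - <y, Phi x> (Ext^1(X,Y) = D Hom(Y, tau X)).\<close>
definition Phi :: "nat list \<Rightarrow> (lidx \<Rightarrow> int) \<Rightarrow> (lidx \<Rightarrow> int)" where
  "Phi ps x = (THE z. z \<in> K0 ps \<and> (\<forall>w\<in>K0 ps. euler ps w z = - euler ps x w))"

text \<open>a = [O], s_0 = [S_0] where 0 -> O -> O(c) -> S_0 -> 0 for a homogeneous point.\<close>
definition cls_a :: "lidx \<Rightarrow> int" where
  "cls_a = (\<lambda>u. if u = LZero then 1 else 0)"

definition cls_s0 :: "lidx \<Rightarrow> int" where
  "cls_s0 = (\<lambda>u. if u = LC then 1 else if u = LZero then -1 else 0)"

definition rk :: "nat list \<Rightarrow> (lidx \<Rightarrow> int) \<Rightarrow> int" where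
  "rk ps x = euler ps x cls_s0"

definition deg :: "nat list \<Rightarrow> (lidx \<Rightarrow> int) \<Rightarrow> int" where
  "deg ps x = (\<Sum>j<Lcm (set ps).
      euler ps ((Phi ps ^^ j) cls_a) (\<lambda>u. x u - rk ps x * cls_a u))"

end

theory Submission
  imports Defs
begin

lemma mem_L [simp]:
  "LZero \<in> lidx_set ps" "LC \<in> lidx_set ps"
  "LPt i l \<in> lidx_set ps \<longleftrightarrow> i < length ps \<and> 1 \<le> l \<and> l < ps ! i"
  by (auto simp: lidx_set_def)

lemma fin_L [simp]: "finite (lidx_set ps)"
proof -
  have "lidx_set ps = insert LZero (insert LC ((\<lambda>(i,l). LPt i l) ` (SIGMA i:{..<length ps}. {1..<ps!i})))"
    by (auto simp: lidx_set_def)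
  then show ?thesis by simp
qed

lemma SL:
  "(\<Sum>u\<in>lidx_set ps. f u) = f LZero + f LC + (\<Sum>i<length ps. \<Sum>l\<in>{1..<ps!i}. f (LPt i l))"
proof -
  let ?P = "(\<lambda>(i,l). LPt i l) ` (SIGMA i:{..<length ps}. {1..<ps!i})"
  have e: "lidx_set ps = insert LZero (insert LC ?P)"
    by (auto simp: lidx_set_def)
  have i: "inj_on (\<lambda>(i,l). LPt i l) (SIGMA i:{..<length ps}. {1..<ps!i})"
    by (auto simp: inj_on_def)
  have "sum f ?P = sum (f \<circ> (\<lambda>(i,l). LPt i l)) (SIGMA i:{..<length ps}. {1..<ps!i})"
    by (rule sum.reindex[OF i])
  also have "\<dots> = (\<Sum>i<length ps. \<Sum>l\<in>{1..<ps!i}. f (LPt i l))"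
    by (subst sum.Sigma) (auto simp: case_prod_beta comp_def)
  finally have "sum f ?P = (\<Sum>i<length ps. \<Sum>l\<in>{1..<ps!i}. f (LPt i l))" .
  moreover have "LZero \<notin> insert LC ?P" "LC \<notin> ?P" by auto
  ultimately show ?thesis by (simp add: e add.assoc)
qed

definition Hv :: "nat list \<Rightarrow> (lidx \<Rightarrow> int) \<Rightarrow> lidx \<Rightarrow> int" where
  "Hv ps z u = (if u \<in> lidx_set ps then (\<Sum>v\<in>lidx_set ps. homdim u v * z v) else 0)"
definition HTv :: "nat list \<Rightarrow> (lidx \<Rightarrow> int) \<Rightarrow> lidx \<Rightarrow> int" where
  "HTv ps x v = (\<Sum>u\<in>lidx_set ps. x u * homdim u v)"
definition Bf :: "nat list \<Rightarrow> (lidx \<Rightarrow> int) \<Rightarrow> nat \<Rightarrow> nat \<Rightarrow> int" where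
  "Bf ps b i l = (if l < ps!i then b (LPt i l) else b LC)"
definition Gi :: "nat list \<Rightarrow> (lidx \<Rightarrow> int) \<Rightarrow> lidx \<Rightarrow> int" where
  "Gi ps b u = (case u of LC \<Rightarrow> b LC
     | LZero \<Rightarrow> b LZero - 2 * b LC - (\<Sum>i<length ps. Bf ps b i 1 - b LC)
     | LPt i l \<Rightarrow> if LPt i l \<in> lidx_set ps then Bf ps b i l - Bf ps b i (Suc l) else 0)"

lemma arm_ge: "1 \<le> (l::nat) \<Longrightarrow> (\<Sum>m\<in>{1..<q}. if l \<le> m then f m else 0) = (\<Sum>m\<in>{l..<q}. f m)"
proof -
  assume "1 \<le> l"
  have "(\<Sum>m\<in>{1..<q}. if l \<le> m then f m else 0) = sum f {m\<in>{1..<q}. l \<le> m}"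
    by (rule sum.inter_filter[symmetric]) simp
  also have "{m\<in>{1..<q}. l \<le> m} = {l..<q}" using \<open>1 \<le> l\<close> by auto
  finally show ?thesis .
qed

lemma arm_le: "(\<Sum>m\<in>{1..<(q::nat)}. if m \<le> l then f m else 0) = (\<Sum>m\<in>{1..l}. f m)" if "l < q"
proof -
  have "(\<Sum>m\<in>{1..<q}. if m \<le> l then f m else 0) = sum f {m\<in>{1..<q}. m \<le> l}"
    by (rule sum.inter_filter[symmetric]) simp
  also have "{m\<in>{1..<q}. m \<le> l} = {1..l}" using that by auto
  finally show ?thesis .
qed

lemma Hv_LC: "Hv ps z LC = z LC"
  unfolding Hv_def by (simp add: SL)

lemma Hv_LZero: "Hv ps z LZero = z LZero + 2 * z LC + (\<Sum>i<length ps. \<Sum>m\<in>{1..<ps!i}. z (LPt i m))"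
  unfolding Hv_def by (simp add: SL)

lemma Hv_LPt: assumes "i < length ps" "1 \<le> l" "l < ps!i"
  shows "Hv ps z (LPt i l) = z LC + (\<Sum>m\<in>{l..<ps!i}. z (LPt i m))"
proof -
  have "(\<Sum>j<length ps. \<Sum>m\<in>{1..<ps!j}. homdim (LPt i l) (LPt j m) * z (LPt j m))
      = (\<Sum>j<length ps. if j = i then (\<Sum>m\<in>{1..<ps!j}. if l \<le> m then z (LPt j m) else 0) else 0)"
    by (rule sum.cong) (auto intro!: sum.cong)
  also have "\<dots> = (\<Sum>m\<in>{l..<ps!i}. z (LPt i m))"
    using assms arm_ge[where l=l and q="ps!i" and f="\<lambda>m. z (LPt i m)"] by simp
  finally show ?thesis using assms unfolding Hv_def by (simp add: SL)
qed

lemma HTv_LZero: "HTv ps x LZero = x LZero"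
  unfolding HTv_def by (simp add: SL)

lemma HTv_LC: "HTv ps x LC = 2 * x LZero + x LC + (\<Sum>i<length ps. \<Sum>m\<in>{1..<ps!i}. x (LPt i m))"
  unfolding HTv_def by (simp add: SL)

lemma HTv_LPt: assumes "i < length ps" "l < ps!i"
  shows "HTv ps x (LPt i l) = x LZero + (\<Sum>m\<in>{1..l}. x (LPt i m))"
proof -
  have "(\<Sum>j<length ps. \<Sum>m\<in>{1..<ps!j}. x (LPt j m) * homdim (LPt j m) (LPt i l))
      = (\<Sum>j<length ps. if j = i then (\<Sum>m\<in>{1..<ps!j}. if m \<le> l then x (LPt j m) else 0) else 0)"
    by (rule sum.cong) (auto intro!: sum.cong)
  also have "\<dots> = (\<Sum>m\<in>{1..l}. x (LPt i m))"
    using assms arm_le[where l=l and q="ps!i" and f="\<lambda>m. x (LPt i m)"] by simp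
  finally show ?thesis using assms unfolding HTv_def by (simp add: SL)
qed


lemma tele: "l \<le> q \<Longrightarrow> (\<Sum>m\<in>{l..<q}. f m - f (Suc m)) = f l - (f q :: int)"
proof (induction q)
  case 0 then show ?case by simp
next
  case (Suc q)
  show ?case
  proof (cases "l = Suc q")
    case True then show ?thesis by simp
  next
    case False
    then have "l \<le> q" using Suc.prems by simp
    then show ?thesis using Suc.IH by (simp add: sum.atLeastLessThan_Suc)
  qed
qed

lemma Bf_Hv: assumes "i < length ps" "1 \<le> l" "l \<le> ps!i"
  shows "Bf ps (Hv ps z) i l = z LC + (\<Sum>m\<in>{l..<ps!i}. z (LPt i m))"
  using assms by (cases "l < ps!i") (auto simp: Bf_def Hv_LPt Hv_LC)

lemma Gi_K0: "Gi ps b \<in> K0 ps"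
  unfolding K0_def by (auto simp: Gi_def split: lidx.split)

lemma G_left: assumes "z \<in> K0 ps" "\<forall>q\<in>set ps. 1 \<le> q"
  shows "Gi ps (Hv ps z) = z"
proof
  fix u show "Gi ps (Hv ps z) u = z u"
  proof (cases u)
    case LZero
    have "(\<Sum>i<length ps. Bf ps (Hv ps z) i 1 - Hv ps z LC) = (\<Sum>i<length ps. \<Sum>m\<in>{1..<ps!i}. z (LPt i m))"
    proof (rule sum.cong)
      fix i assume "i \<in> {..<length ps}"
      then have "i < length ps" "1 \<le> ps!i" using assms(2) by auto
      then show "Bf ps (Hv ps z) i 1 - Hv ps z LC = (\<Sum>m\<in>{1..<ps!i}. z (LPt i m))"
        by (simp add: Bf_Hv Hv_LC)
    qed simp
    then show ?thesis using LZero by (simp add: Gi_def Hv_LZero Hv_LC)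
  next
    case LC then show ?thesis by (simp add: Gi_def Hv_LC)
  next
    case (LPt i l)
    show ?thesis
    proof (cases "LPt i l \<in> lidx_set ps")
      case True
      then have h: "i < length ps" "1 \<le> l" "l < ps!i" by auto
      have "Bf ps (Hv ps z) i l - Bf ps (Hv ps z) i (Suc l) = z (LPt i l)"
        using h by (simp add: Bf_Hv sum.atLeast_Suc_lessThan)
      then show ?thesis using LPt True by (simp add: Gi_def)
    next
      case False
      then show ?thesis using LPt assms(1) by (auto simp: Gi_def K0_def)
    qed
  qed
qed

lemma G_right: assumes "u \<in> lidx_set ps" "\<forall>q\<in>set ps. 1 \<le> q"
  shows "Hv ps (Gi ps b) u = b u"
proof (cases u)
  case LZero
  have "(\<Sum>i<length ps. \<Sum>m\<in>{1..<ps!i}. Gi ps b (LPt i m)) = (\<Sum>i<length ps. Bf ps b i 1 - b LC)"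
  proof (rule sum.cong)
    fix i assume "i \<in> {..<length ps}"
    then have h: "i < length ps" "1 \<le> ps!i" using assms(2) by auto
    have "(\<Sum>m\<in>{1..<ps!i}. Gi ps b (LPt i m)) = (\<Sum>m\<in>{1..<ps!i}. Bf ps b i m - Bf ps b i (Suc m))"
      using h by (intro sum.cong) (auto simp: Gi_def)
    also have "\<dots> = Bf ps b i 1 - Bf ps b i (ps!i)" using h by (simp add: tele)
    finally show "(\<Sum>m\<in>{1..<ps!i}. Gi ps b (LPt i m)) = Bf ps b i 1 - b LC" by (simp add: Bf_def)
  qed simp
  then show ?thesis using LZero by (simp add: Gi_def Hv_LZero)
next
  case LC then show ?thesis by (simp add: Gi_def Hv_LC)
next
  case (LPt i l)
  then have h: "i < length ps" "1 \<le> l" "l < ps!i" using assms by auto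
  have "(\<Sum>m\<in>{l..<ps!i}. Gi ps b (LPt i m)) = (\<Sum>m\<in>{l..<ps!i}. Bf ps b i m - Bf ps b i (Suc m))"
    using h by (intro sum.cong) (auto simp: Gi_def)
  also have "\<dots> = Bf ps b i l - Bf ps b i (ps!i)" using h by (simp add: tele)
  finally show ?thesis using LPt h by (simp add: Hv_LPt Gi_def Bf_def)
qed

lemma euler_Hv: "euler ps x y = (\<Sum>u\<in>lidx_set ps. x u * Hv ps y u)"
  unfolding euler_def Hv_def
  by (auto simp: sum_distrib_left mult_ac intro!: sum.cong)

lemma euler_HT: "euler ps x y = (\<Sum>v\<in>lidx_set ps. HTv ps x v * y v)"
proof -
  have "euler ps x y = (\<Sum>v\<in>lidx_set ps. \<Sum>u\<in>lidx_set ps. x u * y v * homdim u v)"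
    unfolding euler_def by (rule sum.swap)
  also have "\<dots> = (\<Sum>v\<in>lidx_set ps. HTv ps x v * y v)"
    unfolding HTv_def sum_distrib_right by (intro sum.cong refl) (simp add: mult_ac)
  finally show ?thesis .
qed

definition ev :: "lidx \<Rightarrow> lidx \<Rightarrow> int" where "ev u = (\<lambda>v. if v = u then 1 else 0)"

lemma ev_K0: "u \<in> lidx_set ps \<Longrightarrow> ev u \<in> K0 ps"
  by (auto simp: K0_def ev_def)

lemma euler_ev1: "u \<in> lidx_set ps \<Longrightarrow> euler ps (ev u) y = Hv ps y u"
proof -
  assume u: "u \<in> lidx_set ps"
  have "euler ps (ev u) y = (\<Sum>w\<in>lidx_set ps. if w = u then Hv ps y w else 0)"
    unfolding euler_Hv ev_def by (intro sum.cong) auto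
  then show ?thesis using u by simp
qed

lemma euler_ev2: "u \<in> lidx_set ps \<Longrightarrow> euler ps y (ev u) = HTv ps y u"
proof -
  assume u: "u \<in> lidx_set ps"
  have "euler ps y (ev u) = (\<Sum>w\<in>lidx_set ps. if w = u then HTv ps y w else 0)"
    unfolding euler_HT ev_def by (intro sum.cong) auto
  then show ?thesis using u by simp
qed

lemma Gi_cong: assumes "\<forall>u\<in>lidx_set ps. b u = b' u" shows "Gi ps b = Gi ps b'"
proof
  fix u
  have bf: "Bf ps b i l = Bf ps b' i l" if "i < length ps" "1 \<le> l" for i l
    using assms that by (auto simp: Bf_def)
  show "Gi ps b u = Gi ps b' u"
  proof (cases u)
    case LZero
    have "(\<Sum>i<length ps. Bf ps b i 1 - b LC) = (\<Sum>i<length ps. Bf ps b' i 1 - b' LC)"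
      using assms by (intro sum.cong) (auto simp: bf)
    then show ?thesis using LZero assms by (simp add: Gi_def)
  qed (use assms bf in \<open>auto simp: Gi_def\<close>)
qed

definition PP where "PP ps x z \<longleftrightarrow> z \<in> K0 ps \<and> (\<forall>w\<in>K0 ps. euler ps w z = - euler ps x w)"

lemma PP_ex1: assumes "\<forall>q\<in>set ps. 1 \<le> q" shows "\<exists>!z. PP ps x z"
proof
  let ?z = "Gi ps (\<lambda>u. - HTv ps x u)"
  show "PP ps x ?z"
    unfolding PP_def
  proof (intro conjI ballI)
    show "?z \<in> K0 ps" by (rule Gi_K0)
    fix w assume "w \<in> K0 ps"
    have "euler ps w ?z = (\<Sum>u\<in>lidx_set ps. w u * (- HTv ps x u))"
      unfolding euler_Hv using assms by (intro sum.cong) (auto simp: G_right)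
    also have "\<dots> = - euler ps x w"
      by (simp add: euler_HT sum_negf mult_ac)
    finally show "euler ps w ?z = - euler ps x w" .
  qed
next
  fix z assume z: "PP ps x z"
  show "z = Gi ps (\<lambda>u. - HTv ps x u)"
  proof -
    have "Hv ps z = (\<lambda>u. if u \<in> lidx_set ps then - HTv ps x u else 0)"
    proof
      fix u show "Hv ps z u = (if u \<in> lidx_set ps then - HTv ps x u else 0)"
      proof (cases "u \<in> lidx_set ps")
        case True
        then have "euler ps (ev u) z = - euler ps x (ev u)" using z ev_K0 by (auto simp: PP_def)
        then show ?thesis using True by (simp add: euler_ev1 euler_ev2)
      qed (simp add: Hv_def)
    qed
    then have "z = Gi ps (\<lambda>u. if u \<in> lidx_set ps then - HTv ps x u else 0)"
      using G_left[of z ps] z assms by (simp add: PP_def)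
    also have "\<dots> = Gi ps (\<lambda>u. - HTv ps x u)"
      by (rule Gi_cong) auto
    finally show ?thesis .
  qed
qed

lemma Phi_PP: "\<forall>q\<in>set ps. 1 \<le> q \<Longrightarrow> PP ps x (Phi ps x)"
  unfolding Phi_def using PP_ex1[of ps x] by (simp add: PP_def[symmetric] theI')

lemma Phi_eq: "\<forall>q\<in>set ps. 1 \<le> q \<Longrightarrow> PP ps x z \<Longrightarrow> Phi ps x = z"
  unfolding Phi_def using PP_ex1[of ps x] by (simp add: PP_def[symmetric] the1_equality)


lemma arm_zero:
  fixes Y :: "nat \<Rightarrow> int"
  assumes "odd q" and eq: "\<And>l. 1 \<le> l \<Longrightarrow> l < q \<Longrightarrow> sum Y {l..<q} = sum Y {1..l}"
  shows "sum Y {1..<q} = 0"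
proof -
  have pair: "Y l + Y (Suc l) = 0" if "1 \<le> l" "Suc l < q" for l
  proof -
    have a: "sum Y {l..<q} = Y l + sum Y {Suc l..<q}" using that by (simp add: sum.atLeast_Suc_lessThan)
    have b: "sum Y {1..Suc l} = sum Y {1..l} + Y (Suc l)" using that by simp
    show ?thesis using eq[of l] eq[of "Suc l"] a b that by simp
  qed
  have "\<forall>n. 2*n+1 \<le> q \<longrightarrow> sum Y {1..<2*n+1} = 0"
  proof
    fix n show "2*n+1 \<le> q \<longrightarrow> sum Y {1..<2*n+1} = 0"
    proof (induction n)
      case 0 then show ?case by simp
    next
      case (Suc n)
      show ?case
      proof
        assume h: "2 * Suc n + 1 \<le> q"
        have "sum Y {1..<2 * Suc n + 1} = sum Y {1..<2*n+1} + Y (2*n+1) + Y (Suc (2*n+1))"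
          by (simp add: sum.atLeastLessThan_Suc)
        then show "sum Y {1..<2 * Suc n + 1} = 0" using Suc.IH h pair[of "2*n+1"] by simp
      qed
    qed
  qed
  moreover obtain n where "q = 2*n+1" using \<open>odd q\<close> oddE by blast
  ultimately show ?thesis by simp
qed

lemma alt_sum: "(\<Sum>j<2*n. (-1::int)^j) = 0"
  by (induction n) (auto simp: sum.lessThan_Suc)

lemma E_add2: "euler ps x (\<lambda>u. a u + b u) = euler ps x a + euler ps x b"
  unfolding euler_def by (simp add: algebra_simps sum.distrib)
lemma E_neg2: "euler ps x (\<lambda>u. - b u) = - euler ps x b"
  unfolding euler_def by (simp add: sum_negf)
lemma E_neg1: "euler ps (\<lambda>u. - b u) x = - euler ps b x"
  unfolding euler_def by (simp add: sum_negf)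

theorem lemma3p8:
  fixes ps :: "nat list" and y :: "lidx \<Rightarrow> int"
  assumes "\<forall>q\<in>set ps. 2 \<le> q"
    and "y \<in> K0 ps"
  shows "((\<forall>x\<in>K0 ps. euler ps y (\<lambda>u. x u + Phi ps x u) = 0)
            \<longleftrightarrow> Phi ps y = (\<lambda>u. - y u))
         \<and> (Phi ps y = (\<lambda>u. - y u) \<longrightarrow> rk ps y = 0 \<and> deg ps y = 0)"
proof -
  have q1: "\<forall>q\<in>set ps. 1 \<le> q" using assms(1) by auto
  have yneg: "(\<lambda>u. - y u) \<in> K0 ps" using assms(2) by (simp add: K0_def)
  have P1: "(\<forall>x\<in>K0 ps. euler ps y (\<lambda>u. x u + Phi ps x u) = 0)
      \<longleftrightarrow> (\<forall>w\<in>K0 ps. euler ps w y = euler ps y w)"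
  proof -
    have "euler ps y (\<lambda>u. x u + Phi ps x u) = euler ps y x - euler ps x y" if "x \<in> K0 ps" for x
      using Phi_PP[OF q1, of x] assms(2) by (simp add: E_add2 PP_def)
    then show ?thesis by auto
  qed
  have P2: "Phi ps y = (\<lambda>u. - y u) \<longleftrightarrow> (\<forall>w\<in>K0 ps. euler ps w y = euler ps y w)"
  proof
    assume "Phi ps y = (\<lambda>u. - y u)"
    then show "\<forall>w\<in>K0 ps. euler ps w y = euler ps y w"
      using Phi_PP[OF q1, of y] by (simp add: PP_def E_neg2)
  next
    assume "\<forall>w\<in>K0 ps. euler ps w y = euler ps y w"
    then have "PP ps y (\<lambda>u. - y u)" using yneg by (simp add: PP_def E_neg2)
    then show "Phi ps y = (\<lambda>u. - y u)" by (rule Phi_eq[OF q1])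
  qed
  have part2: "rk ps y = 0 \<and> deg ps y = 0" if phy: "Phi ps y = (\<lambda>u. - y u)"
  proof -
    have sym: "\<forall>w\<in>K0 ps. euler ps w y = euler ps y w" using P2 phy by simp
    have comp: "Hv ps y u = HTv ps y u" if "u \<in> lidx_set ps" for u
      using sym ev_K0[OF that] euler_ev1[OF that] euler_ev2[OF that] by metis
    define S where "S = (\<Sum>i<length ps. \<Sum>m\<in>{1..<ps!i}. y (LPt i m))"
    have eLC: "y LC = 2 * y LZero + y LC + S"
      using comp[of LC] by (simp add: Hv_LC HTv_LC S_def)
    have eL0: "y LZero + 2 * y LC + S = y LZero"
      using comp[of LZero] by (simp add: Hv_LZero HTv_LZero S_def)
    have rk0: "rk ps y = 0"
    proof -
      have "rk ps y = HTv ps y LC - HTv ps y LZero"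
        unfolding rk_def euler_HT by (simp add: SL cls_s0_def)
      then show ?thesis using eLC eL0 by (simp add: HTv_LC HTv_LZero S_def)
    qed
    have ak: "cls_a \<in> K0 ps" by (simp add: K0_def cls_a_def)
    have pw: "(Phi ps ^^ j) cls_a \<in> K0 ps \<and> euler ps ((Phi ps ^^ j) cls_a) y = (-1)^j * euler ps cls_a y" for j
    proof (induction j)
      case 0 then show ?case using ak by simp
    next
      case (Suc j)
      define x where "x = (Phi ps ^^ j) cls_a"
      have xk: "x \<in> K0 ps" and ih: "euler ps x y = (-1)^j * euler ps cls_a y" using Suc.IH x_def by auto
      have px: "PP ps x (Phi ps x)" and py: "PP ps y (Phi ps y)" using Phi_PP[OF q1] by auto
      have "euler ps (Phi ps x) (Phi ps y) = - euler ps y (Phi ps x)" using px py by (simp add: PP_def)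
      moreover have "euler ps y (Phi ps x) = - euler ps x y" using px assms(2) by (simp add: PP_def)
      ultimately have "euler ps (Phi ps x) y = - euler ps x y" using phy by (simp add: E_neg2)
      moreover have "Phi ps x \<in> K0 ps" using px by (simp add: PP_def)
      ultimately show ?case using ih by (simp add: x_def[symmetric])
    qed
    have ea: "euler ps cls_a y = y LZero + 2 * y LC + S"
    proof -
      have "cls_a = ev LZero" by (auto simp: cls_a_def ev_def)
      then show ?thesis using euler_ev1[of LZero ps y] by (simp add: Hv_LZero S_def)
    qed
    have "deg ps y = (\<Sum>j<Lcm (set ps). (-1)^j * euler ps cls_a y)"
      unfolding deg_def rk0 using pw by simp
    also have "\<dots> = (\<Sum>j<Lcm (set ps). (-1::int)^j) * euler ps cls_a y"
      by (simp add: sum_distrib_right)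
    also have "\<dots> = 0"
    proof (cases "even (Lcm (set ps))")
      case True
      then obtain n where "Lcm (set ps) = 2 * n" by blast
      then show ?thesis by (simp add: alt_sum)
    next
      case False
      have "(\<Sum>m\<in>{1..<ps!i}. y (LPt i m)) = 0" if "i < length ps" for i
      proof (rule arm_zero)
        have "ps!i \<in> set ps" using that by simp
        then have "ps!i dvd Lcm (set ps)" by (rule dvd_Lcm)
        then show "odd (ps!i)" using False dvd_trans by blast
        fix l assume l: "1 \<le> l" "l < ps!i"
        have "Hv ps y (LPt i l) = HTv ps y (LPt i l)" using comp l that by simp
        then show "(\<Sum>m\<in>{l..<ps!i}. y (LPt i m)) = (\<Sum>m\<in>{1..l}. y (LPt i m))"
          using l that eLC eL0 by (simp add: Hv_LPt HTv_LPt)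
      qed
      then have "S = 0" unfolding S_def by simp
      then have "euler ps cls_a y = 0" using ea eLC eL0 by simp
      then show ?thesis by simp
    qed
    finally show ?thesis using rk0 by simp
  qed
  show ?thesis using P1 P2 part2 by blast
qed

end
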